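(* For all $n\ge2$, the number of permutations in $\mathcal{S}_n$ avoiding each of $1243$, $2143$ and $231$ equals $(n+2)2^{n-3}$.
   Context: A permutation $\pi\in\mathcal{S}_n$ avoids $\tau\in\mathcal{S}_k$ if there are no indices $i_1<\dots<i_k$ with $\pi_{i_1}\cdots\pi_{i_k}$ in the same relative order as $\tau_1\cdots\tau_k$. *)

theory Defs
  imports Complex_Main
begin

definition perms :: "nat \<Rightarrow> nat list set" where
  "perms n = {xs. distinct xs \<and> set xs = {1..n}}"

definition contains :: "nat list \<Rightarrow> nat list \<Rightarrow> bool" where
  "contains p tau \<longleftrightarrow>
     (\<exists>idx :: nat \<Rightarrow> nat.
        (\<forall>a b. a < b \<and> b < length tau \<longrightarrow> idx a < idx b) \<and>
        (\<forall>a < length tau. idx a < length p) \<and>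
        (\<forall>a < length tau. \<forall>b < length tau.
            (p ! idx a < p ! idx b) \<longleftrightarrow> (tau ! a < tau ! b)))"

definition avoids :: "nat list \<Rightarrow> nat list \<Rightarrow> bool" where
  "avoids p tau \<longleftrightarrow> \<not> contains p tau"

end

theory Submission
  imports Defs
begin


definition bef :: "nat list \<Rightarrow> nat \<Rightarrow> nat \<Rightarrow> bool" where
  "bef p x y \<longleftrightarrow> (\<exists>i j. i < j \<and> j < length p \<and> p!i = x \<and> p!j = y)"

lemma bef_Nil[simp]: "\<not> bef [] x y" by (simp add: bef_def)

lemma bef_Cons[simp]: "bef (z # p) x y \<longleftrightarrow> (x = z \<and> y \<in> set p) \<or> bef p x y"
proof
  assume "bef (z # p) x y"
  then obtain i j where h: "i < j" "j < length (z#p)" "(z#p)!i = x" "(z#p)!j = y"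
    unfolding bef_def by blast
  show "(x = z \<and> y \<in> set p) \<or> bef p x y"
  proof (cases i)
    case 0
    then obtain j' where "j = Suc j'" using h by (cases j) auto
    then show ?thesis using h 0 by auto
  next
    case (Suc i')
    then obtain j' where "j = Suc j'" using h by (cases j) auto
    then show ?thesis using h Suc unfolding bef_def by auto
  qed
next
  assume "(x = z \<and> y \<in> set p) \<or> bef p x y"
  then show "bef (z # p) x y"
  proof
    assume "x = z \<and> y \<in> set p"
    then obtain j where "j < length p" "p!j = y" by (auto simp: in_set_conv_nth)
    then show ?thesis using \<open>x = z \<and> y \<in> set p\<close> unfolding bef_def
      by (intro exI[of _ 0] exI[of _ "Suc j"]) auto
  next
    assume "bef p x y"
    then obtain i j where "i < j" "j < length p" "p!i = x" "p!j = y" unfolding bef_def by blast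
    then show ?thesis unfolding bef_def
      by (intro exI[of _ "Suc i"] exI[of _ "Suc j"]) auto
  qed
qed

lemma bef_append[simp]: "bef (p @ q) x y \<longleftrightarrow> bef p x y \<or> bef q x y \<or> (x \<in> set p \<and> y \<in> set q)"
  by (induction p) auto

lemma bef_map: "bef (map f p) x y \<longleftrightarrow> (\<exists>u v. bef p u v \<and> x = f u \<and> y = f v)"
  by (induction p) auto

lemma bef_set: "bef p x y \<Longrightarrow> x \<in> set p \<and> y \<in> set p"
  by (induction p) auto

definition c231 where "c231 p \<longleftrightarrow> (\<exists>a b c. bef p a b \<and> bef p b c \<and> c < a \<and> a < b)"
definition c132 where "c132 p \<longleftrightarrow> (\<exists>a b c. bef p a b \<and> bef p b c \<and> a < c \<and> c < b)"
definition c1243 where "c1243 p \<longleftrightarrow> (\<exists>a b c d. bef p a b \<and> bef p b c \<and> bef p c d \<and> a < b \<and> b < d \<and> d < c)"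
definition c2143 where "c2143 p \<longleftrightarrow> (\<exists>a b c d. bef p a b \<and> bef p b c \<and> bef p c d \<and> b < a \<and> a < d \<and> d < c)"

lemma less3: "(a::nat) < 3 \<longleftrightarrow> a = 0 \<or> a = 1 \<or> a = 2" by auto
lemma less4: "(a::nat) < 4 \<longleftrightarrow> a = 0 \<or> a = 1 \<or> a = 2 \<or> a = 3" by auto

lemma bef2:
  assumes "distinct p" "bef p a b" "bef p b c"
  obtains i j k where "i < j" "j < k" "k < length p" "p!i = a" "p!j = b" "p!k = c"
proof -
  obtain i j where 1: "i < j" "j < length p" "p!i = a" "p!j = b" using assms unfolding bef_def by blast
  obtain j' k where 2: "j' < k" "k < length p" "p!j' = b" "p!k = c" using assms unfolding bef_def by blast
  have "j = j'" using 1 2 assms(1) nth_eq_iff_index_eq by fastforce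
  then show ?thesis using 1 2 that by blast
qed

lemma bef3:
  assumes "distinct p" "bef p a b" "bef p b c" "bef p c d"
  obtains i j k l where "i < j" "j < k" "k < l" "l < length p" "p!i = a" "p!j = b" "p!k = c" "p!l = d"
proof -
  obtain i j k where 1: "i < j" "j < k" "k < length p" "p!i = a" "p!j = b" "p!k = c"
    using bef2 assms by blast
  obtain k' l where 2: "k' < l" "l < length p" "p!k' = c" "p!l = d" using assms unfolding bef_def by blast
  have "k = k'" using 1 2 assms(1) nth_eq_iff_index_eq by fastforce
  then show ?thesis using 1 2 that by blast
qed

lemma c231_iff: assumes "distinct p" shows "contains p [2,3,1] \<longleftrightarrow> c231 p"
proof
  assume "contains p [2,3,1]"
  then obtain idx where h1: "\<forall>a b. a < b \<and> b < length [2,3,1::nat] \<longrightarrow> idx a < idx b"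
    and h2: "\<forall>a<length [2,3,1::nat]. idx a < length p"
    and h3: "\<forall>a<length [2,3,1::nat]. \<forall>b<length [2,3,1::nat]. (p ! idx a < p ! idx b) \<longleftrightarrow> ([2,3,1::nat] ! a < [2,3,1] ! b)"
    unfolding contains_def by blast
  have o: "idx 0 < idx 1" "idx 1 < idx 2" "idx 2 < length p" "idx 0 < length p" "idx 1 < length p" using h1 h2 by auto
  have v: "p ! idx 2 < p ! idx 0" "p ! idx 0 < p ! idx 1"
    using h3[rule_format, of 2 0] h3[rule_format, of 0 1] by auto
  have b: "bef p (p!idx 0) (p!idx 1)" "bef p (p!idx 1) (p!idx 2)"
    unfolding bef_def using o by blast+
  show "c231 p" unfolding c231_def using b v by blast
next
  assume "c231 p"
  then obtain a b c where bb: "bef p a b" "bef p b c" "c < a" "a < b" unfolding c231_def by blast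
  then obtain i j k where h: "i < j" "j < k" "k < length p" "p!i = a" "p!j = b" "p!k = c"
    using bef2 assms by metis
  show "contains p [2,3,1]" unfolding contains_def
    apply (rule exI[of _ "\<lambda>x. [i,j,k] ! x"])
    using h bb by (auto simp: less_Suc_eq)
qed

lemma c132_iff: assumes "distinct p" shows "contains p [1,3,2] \<longleftrightarrow> c132 p"
proof
  assume "contains p [1,3,2]"
  then obtain idx where h1: "\<forall>a b. a < b \<and> b < length [1,3,2::nat] \<longrightarrow> idx a < idx b"
    and h2: "\<forall>a<length [1,3,2::nat]. idx a < length p"
    and h3: "\<forall>a<length [1,3,2::nat]. \<forall>b<length [1,3,2::nat]. (p ! idx a < p ! idx b) \<longleftrightarrow> ([1,3,2::nat] ! a < [1,3,2] ! b)"
    unfolding contains_def by blast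
  have o: "idx 0 < idx 1" "idx 1 < idx 2" "idx 2 < length p" "idx 0 < length p" "idx 1 < length p" using h1 h2 by auto
  have v: "p ! idx 0 < p ! idx 2" "p ! idx 2 < p ! idx 1"
    using h3[rule_format, of 0 2] h3[rule_format, of 2 1] by auto
  have b: "bef p (p!idx 0) (p!idx 1)" "bef p (p!idx 1) (p!idx 2)"
    unfolding bef_def using o by blast+
  show "c132 p" unfolding c132_def using b v by blast
next
  assume "c132 p"
  then obtain a b c where bb: "bef p a b" "bef p b c" "a < c" "c < b" unfolding c132_def by blast
  then obtain i j k where h: "i < j" "j < k" "k < length p" "p!i = a" "p!j = b" "p!k = c"
    using bef2 assms by metis
  show "contains p [1,3,2]" unfolding contains_def
    apply (rule exI[of _ "\<lambda>x. [i,j,k] ! x"])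
    using h bb by (auto simp: less_Suc_eq)
qed

lemma c1243_iff: assumes "distinct p" shows "contains p [1,2,4,3] \<longleftrightarrow> c1243 p"
proof
  assume "contains p [1,2,4,3]"
  then obtain idx where h1: "\<forall>a b. a < b \<and> b < length [1,2,4,3::nat] \<longrightarrow> idx a < idx b"
    and h2: "\<forall>a<length [1,2,4,3::nat]. idx a < length p"
    and h3: "\<forall>a<length [1,2,4,3::nat]. \<forall>b<length [1,2,4,3::nat]. (p ! idx a < p ! idx b) \<longleftrightarrow> ([1,2,4,3::nat] ! a < [1,2,4,3] ! b)"
    unfolding contains_def by blast
  have o: "idx 0 < idx 1" "idx 1 < idx 2" "idx 2 < idx 3" "idx 3 < length p" "idx 0 < length p" "idx 1 < length p" "idx 2 < length p" using h1 h2 by auto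
  have v: "p ! idx 0 < p ! idx 1" "p ! idx 1 < p ! idx 3" "p ! idx 3 < p ! idx 2"
    using h3[rule_format, of 0 1] h3[rule_format, of 1 3] h3[rule_format, of 3 2] by auto
  have b: "bef p (p!idx 0) (p!idx 1)" "bef p (p!idx 1) (p!idx 2)" "bef p (p!idx 2) (p!idx 3)"
    unfolding bef_def using o by blast+
  show "c1243 p" unfolding c1243_def using b v by blast
next
  assume "c1243 p"
  then obtain a b c d where bb: "bef p a b" "bef p b c" "bef p c d" "a < b" "b < d" "d < c" unfolding c1243_def by blast
  then obtain i j k l where h: "i < j" "j < k" "k < l" "l < length p" "p!i = a" "p!j = b" "p!k = c" "p!l = d"
    using bef3 assms by metis
  show "contains p [1,2,4,3]" unfolding contains_def
    apply (rule exI[of _ "\<lambda>x. [i,j,k,l] ! x"])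
    using h bb by (auto simp: less_Suc_eq)
qed

lemma c2143_iff: assumes "distinct p" shows "contains p [2,1,4,3] \<longleftrightarrow> c2143 p"
proof
  assume "contains p [2,1,4,3]"
  then obtain idx where h1: "\<forall>a b. a < b \<and> b < length [2,1,4,3::nat] \<longrightarrow> idx a < idx b"
    and h2: "\<forall>a<length [2,1,4,3::nat]. idx a < length p"
    and h3: "\<forall>a<length [2,1,4,3::nat]. \<forall>b<length [2,1,4,3::nat]. (p ! idx a < p ! idx b) \<longleftrightarrow> ([2,1,4,3::nat] ! a < [2,1,4,3] ! b)"
    unfolding contains_def by blast
  have o: "idx 0 < idx 1" "idx 1 < idx 2" "idx 2 < idx 3" "idx 3 < length p" "idx 0 < length p" "idx 1 < length p" "idx 2 < length p" using h1 h2 by auto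
  have v: "p ! idx 1 < p ! idx 0" "p ! idx 0 < p ! idx 3" "p ! idx 3 < p ! idx 2"
    using h3[rule_format, of 1 0] h3[rule_format, of 0 3] h3[rule_format, of 3 2] by auto
  have b: "bef p (p!idx 0) (p!idx 1)" "bef p (p!idx 1) (p!idx 2)" "bef p (p!idx 2) (p!idx 3)"
    unfolding bef_def using o by blast+
  show "c2143 p" unfolding c2143_def using b v by blast
next
  assume "c2143 p"
  then obtain a b c d where bb: "bef p a b" "bef p b c" "bef p c d" "b < a" "a < d" "d < c" unfolding c2143_def by blast
  then obtain i j k l where h: "i < j" "j < k" "k < l" "l < length p" "p!i = a" "p!j = b" "p!k = c" "p!l = d"
    using bef3 assms by metis
  show "contains p [2,1,4,3]" unfolding contains_def
    apply (rule exI[of _ "\<lambda>x. [i,j,k,l] ! x"])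
    using h bb by (auto simp: less_Suc_eq)
qed



definition good where "good p \<longleftrightarrow> \<not> c1243 p \<and> \<not> c2143 p \<and> \<not> c231 p"
definition tgood where "tgood p \<longleftrightarrow> \<not> c132 p \<and> \<not> c231 p"
definition S where "S n = {p \<in> perms n. good p}"
definition T where "T n = {p \<in> perms n. tgood p}"

lemma finite_perms: "finite (perms n)"
proof -
  have "length xs = n" if "xs \<in> perms n" for xs
    using that distinct_card[of xs] unfolding perms_def by simp
  then have "perms n \<subseteq> {xs. set xs \<subseteq> {1..n} \<and> length xs = n}"
    unfolding perms_def by auto
  moreover have "finite {xs. set xs \<subseteq> {1..n} \<and> length xs = n}"
    by (rule finite_lists_length_eq) simp
  ultimately show ?thesis by (rule finite_subset)
qed

lemma perms0: "perms 0 = {[]}" unfolding perms_def by auto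

lemma perms1: "perms 1 = {[1]}"
proof -
  have "xs = [1]" if "distinct xs" "set xs = {1}" for xs :: "nat list"
  proof -
    have "length xs = 1" using distinct_card[OF that(1)] that(2) by simp
    then obtain x where "xs = [x]" by (cases xs) auto
    then show ?thesis using that by auto
  qed
  then show ?thesis unfolding perms_def by auto
qed

lemma mono_pat:
  assumes "\<And>x y. bef q x y \<Longrightarrow> bef p x y"
  shows "c132 q \<Longrightarrow> c132 p" "c231 q \<Longrightarrow> c231 p" "c1243 q \<Longrightarrow> c1243 p" "c2143 q \<Longrightarrow> c2143 p"
  unfolding c132_def c231_def c1243_def c2143_def using assms by meson+

lemma tgood_mono: "tgood p \<Longrightarrow> (\<And>x y. bef q x y \<Longrightarrow> bef p x y) \<Longrightarrow> tgood q"
  unfolding tgood_def using mono_pat(1,2) by metis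
lemma good_mono: "good p \<Longrightarrow> (\<And>x y. bef q x y \<Longrightarrow> bef p x y) \<Longrightarrow> good q"
  unfolding good_def using mono_pat(2,3,4) by metis

lemma l1: "{1..n} - {n} = {1..<(n::nat)}" by auto
lemma l2: "n \<ge> 1 \<Longrightarrow> insert n {1..n-1} = {1..(n::nat)}" by auto

lemma perms_snoc: assumes "xs \<in> perms (n-1)" "n \<ge> 1" shows "xs @ [n] \<in> perms n"
proof -
  have d: "distinct xs" and s: "set xs = {1..n-1}" using assms(1) unfolding perms_def by auto
  have "n \<notin> set xs" using s assms(2) by simp
  moreover have "set (xs @ [n]) = insert n (set xs)" by simp
  ultimately show ?thesis unfolding perms_def using d s l2[OF assms(2)] by simp
qed

lemma perms_cons: assumes "xs \<in> perms (n-1)" "n \<ge> 1" shows "n # xs \<in> perms n"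
proof -
  have d: "distinct xs" and s: "set xs = {1..n-1}" using assms(1) unfolding perms_def by auto
  have "n \<notin> set xs" using s assms(2) by simp
  then show ?thesis unfolding perms_def using d s l2[OF assms(2)] by simp
qed

lemma split_max:
  assumes "p \<in> perms n" "n \<ge> 1"
  obtains a b where "p = a @ n # b" "distinct (a @ n # b)" "set a \<union> set b = {1..<n}"
proof -
  have "n \<in> set p" using assms unfolding perms_def by auto
  then obtain a b where ab: "p = a @ n # b" using split_list by metis
  have d: "distinct (a @ n # b)" using assms ab unfolding perms_def by auto
  have "set a \<union> set b = set p - {n}" using ab d by auto
  also have "\<dots> = {1..<n}" using assms l1 unfolding perms_def by simp
  finally show ?thesis using that ab d by blast
qed

lemma perms_bound: "xs \<in> perms n \<Longrightarrow> x \<in> set xs \<Longrightarrow> 1 \<le> x \<and> x \<le> n"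
  unfolding perms_def by auto



lemma befC1: "bef (z # p) x y \<Longrightarrow> y \<in> set p" by (auto dest: bef_set)
lemma befC2: "bef (z # p) x y \<Longrightarrow> x \<noteq> z \<Longrightarrow> bef p x y" by auto
lemma befS1: "bef (p @ [z]) x y \<Longrightarrow> x \<in> set p" by (auto dest: bef_set)
lemma befS2: "bef (p @ [z]) x y \<Longrightarrow> y \<noteq> z \<Longrightarrow> bef p x y" by auto

lemma cons_max:
  assumes "\<And>x. x \<in> set p \<Longrightarrow> x < z"
  shows "c132 (z#p) \<Longrightarrow> c132 p" "c231 (z#p) \<Longrightarrow> c231 p"
     "c1243 (z#p) \<Longrightarrow> c1243 p" "c2143 (z#p) \<Longrightarrow> c2143 p"
  unfolding c132_def c231_def c1243_def c2143_def
  using assms befC1 befC2 by (smt (verit) order.strict_trans less_irrefl)+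

lemma snoc_max:
  assumes "\<And>x. x \<in> set p \<Longrightarrow> x < z"
  shows "c132 (p@[z]) \<Longrightarrow> c132 p" "c231 (p@[z]) \<Longrightarrow> c231 p"
     "c1243 (p@[z]) \<Longrightarrow> c1243 p" "c2143 (p@[z]) \<Longrightarrow> c2143 p"
  unfolding c132_def c231_def c1243_def c2143_def
  using assms befS1 befS2 by (smt (verit) order.strict_trans less_irrefl)+

lemma l4: "(m::nat) \<ge> 1 \<Longrightarrow> {1..<m} = {1..m-1}" by auto

lemma T_rec:
  assumes "m \<ge> 2"
  shows "T m = (\<lambda>xs. m # xs) ` T (m-1) \<union> (\<lambda>xs. xs @ [m]) ` T (m-1)"
proof
  show "T m \<subseteq> (\<lambda>xs. m # xs) ` T (m-1) \<union> (\<lambda>xs. xs @ [m]) ` T (m-1)"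
  proof
    fix p assume p: "p \<in> T m"
    then have pp: "p \<in> perms m" and tg: "tgood p" unfolding T_def by auto
    obtain a b where ab: "p = a @ m # b" "distinct (a @ m # b)" "set a \<union> set b = {1..<m}"
      using split_max[OF pp] assms by auto
    have sab: "set a \<union> set b = {1..m-1}" using ab(3) l4 assms by simp
    show "p \<in> (\<lambda>xs. m # xs) ` T (m-1) \<union> (\<lambda>xs. xs @ [m]) ` T (m-1)"
    proof (cases "a = []")
      case True
      have "bef b x y \<Longrightarrow> bef p x y" for x y using ab(1) True by simp
      then have "tgood b" using tgood_mono[OF tg] by blast
      moreover have "b \<in> perms (m-1)" unfolding perms_def using ab(2) sab True by simp
      ultimately have "b \<in> T (m-1)" unfolding T_def by simp
      then show ?thesis using ab True by auto
    next
      case False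
      show ?thesis
      proof (cases "b = []")
        case True
        have "bef a x y \<Longrightarrow> bef p x y" for x y using ab(1) True by simp
        then have "tgood a" using tgood_mono[OF tg] by blast
        moreover have "a \<in> perms (m-1)" unfolding perms_def using ab(2) sab True by simp
        ultimately have "a \<in> T (m-1)" unfolding T_def by simp
        then show ?thesis using ab True by auto
      next
        case False2: False
        obtain x where x: "x \<in> set a" using False by (cases a) auto
        obtain z where z: "z \<in> set b" using False2 by (cases b) auto
        have ne: "x \<noteq> z" using x z ab(2) by auto
        have lt: "x < m" "z < m" using x z ab(3) by auto
        have b1: "bef p x m" "bef p m z" using x z ab(1) by simp_all
        have "c132 p \<or> c231 p"
        proof (cases "x < z")
          case True
          then show ?thesis unfolding c132_def using b1 lt by blast
        next
          case False
          then have "z < x" using ne by simp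
          then show ?thesis unfolding c231_def using b1 lt by blast
        qed
        then show ?thesis using tg unfolding tgood_def by auto
      qed
    qed
  qed
next
  show "(\<lambda>xs. m # xs) ` T (m-1) \<union> (\<lambda>xs. xs @ [m]) ` T (m-1) \<subseteq> T m"
  proof
    fix p assume "p \<in> (\<lambda>xs. m # xs) ` T (m-1) \<union> (\<lambda>xs. xs @ [m]) ` T (m-1)"
    then obtain xs where xs: "xs \<in> T (m-1)" and p: "p = m # xs \<or> p = xs @ [m]" by auto
    have xp: "xs \<in> perms (m-1)" and tg: "\<not> c132 xs" "\<not> c231 xs" using xs unfolding T_def tgood_def by auto
    have lt: "\<And>x. x \<in> set xs \<Longrightarrow> x < m" using perms_bound[OF xp] assms by fastforce
    have "p \<in> perms m" using p perms_snoc perms_cons xp assms by auto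
    moreover have "tgood p" using p tg cons_max[OF lt] snoc_max[OF lt] unfolding tgood_def by blast
    ultimately show "p \<in> T m" unfolding T_def by auto
  qed
qed



lemma card_T: "m \<ge> 1 \<Longrightarrow> card (T m) = 2 ^ (m - 1)"
proof (induction m rule: dec_induct)
  case base
  have "T 1 = {[1]}" unfolding T_def tgood_def c132_def c231_def perms1 by auto
  then show ?case by simp
next
  case (step m)
  have fin: "finite (T m)" unfolding T_def using finite_perms by simp
  have lt: "\<And>x. xs \<in> T m \<Longrightarrow> x \<in> set xs \<Longrightarrow> x < Suc m" for xs
    using perms_bound unfolding T_def by fastforce
  have ne: "xs \<in> T m \<Longrightarrow> xs \<noteq> []" for xs using step(1) unfolding T_def perms_def by auto
  have disj: "(\<lambda>xs. Suc m # xs) ` T m \<inter> (\<lambda>xs. xs @ [Suc m]) ` T m = {}"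
  proof (rule ccontr)
    assume "(\<lambda>xs. Suc m # xs) ` T m \<inter> (\<lambda>xs. xs @ [Suc m]) ` T m \<noteq> {}"
    then obtain xs ys where h: "xs \<in> T m" "ys \<in> T m" "Suc m # xs = ys @ [Suc m]" by auto
    then obtain y ys' where "ys = y # ys'" using ne by (cases ys) auto
    then have "y = Suc m" "y \<in> set ys" using h by auto
    then show False using lt[OF h(2)] by fastforce
  qed
  have "card (T (Suc m)) = card ((\<lambda>xs. Suc m # xs) ` T m) + card ((\<lambda>xs. xs @ [Suc m]) ` T m)"
    using T_rec[of "Suc m"] step(1) card_Un_disjoint[OF _ _ disj] fin by simp
  also have "\<dots> = card (T m) + card (T m)"
    by (simp add: card_image inj_on_def)
  finally show ?case using step by (cases m) auto
qed

lemma map_Suc_pat: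
  "c132 (map Suc ys) \<longleftrightarrow> c132 ys" "c231 (map Suc ys) \<longleftrightarrow> c231 ys"
  unfolding c132_def c231_def bef_map by (auto; blast)+

lemma cons_min:
  assumes "\<And>x. x \<in> set r \<Longrightarrow> z < x"
  shows "c231 (z#r) \<Longrightarrow> c231 r" "c1243 (z#r) \<Longrightarrow> c132 r" "c2143 (z#r) \<Longrightarrow> c132 r"
  unfolding c132_def c231_def c1243_def c2143_def
  using assms befC1 befC2 by (smt (verit) order.strict_trans less_irrefl)+

lemma c132_1243:
  assumes "\<And>x. x \<in> set r \<Longrightarrow> z < x" "c132 r"
  shows "c1243 (z # r)"
proof -
  obtain a b c where h: "bef r a b" "bef r b c" "a < c" "c < b" using assms(2) unfolding c132_def by blast
  have "a \<in> set r" using h bef_set by blast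
  then have "bef (z # r) z a" "z < a" using assms by auto
  then show ?thesis unfolding c1243_def using h by auto
qed

lemma setl: "(n::nat) \<ge> 3 \<Longrightarrow> insert 1 (insert n (Suc ` {1..n-2})) = {1..n}"
  by (auto simp: image_Suc_atLeastAtMost)



lemma S_rec:
  assumes n2: "n \<ge> 2"
  shows "S n = ((\<lambda>xs. xs @ [n]) ` S (n-1) \<union> (\<lambda>xs. n # xs) ` S (n-1))
               \<union> (\<lambda>ys. 1 # n # map Suc ys) ` (T (n-2) - {[]})"
proof
  show "S n \<subseteq> ((\<lambda>xs. xs @ [n]) ` S (n-1) \<union> (\<lambda>xs. n # xs) ` S (n-1))
               \<union> (\<lambda>ys. 1 # n # map Suc ys) ` (T (n-2) - {[]})"
  proof
    fix p assume p: "p \<in> S n"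
    then have pp: "p \<in> perms n" and tg: "good p" unfolding S_def by auto
    obtain a b where ab: "p = a @ n # b" "distinct (a @ n # b)" "set a \<union> set b = {1..<n}"
      using split_max[OF pp] n2 by auto
    have sab: "set a \<union> set b = {1..n-1}" using ab(3) l4 n2 by simp
    show "p \<in> ((\<lambda>xs. xs @ [n]) ` S (n-1) \<union> (\<lambda>xs. n # xs) ` S (n-1))
               \<union> (\<lambda>ys. 1 # n # map Suc ys) ` (T (n-2) - {[]})"
    proof (cases "a = []")
      case True
      have "bef b x y \<Longrightarrow> bef p x y" for x y using ab(1) True by simp
      then have "good b" using good_mono[OF tg] by blast
      moreover have "b \<in> perms (n-1)" unfolding perms_def using ab(2) sab True by simp
      ultimately have "b \<in> S (n-1)" unfolding S_def by simp
      then show ?thesis using ab True by auto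
    next
      case False
      show ?thesis
      proof (cases "b = []")
        case True
        have "bef a x y \<Longrightarrow> bef p x y" for x y using ab(1) True by simp
        then have "good a" using good_mono[OF tg] by blast
        moreover have "a \<in> perms (n-1)" unfolding perms_def using ab(2) sab True by simp
        ultimately have "a \<in> S (n-1)" unfolding S_def by simp
        then show ?thesis using ab True by auto
      next
        case False2: False
        obtain z where z: "z \<in> set b" using False2 by (cases b) auto
        have sep: "x < y" if "x \<in> set a" "y \<in> set b" for x y
        proof (rule ccontr)
          assume "\<not> x < y"
          moreover have "x \<noteq> y" using that ab(2) by auto
          ultimately have "y < x" by simp
          moreover have "x < n" using that ab(3) by auto
          moreover have "bef p x n" "bef p n y" using that ab(1) by simp_all
          ultimately have "c231 p" unfolding c231_def by blast
          then show False using tg unfolding good_def by simp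
        qed
        obtain x where a1: "a = [x]"
        proof (cases a)
          case Nil then show ?thesis using False by simp
        next
          case (Cons x r)
          show ?thesis
          proof (cases r)
            case Nil then show ?thesis using Cons that by simp
          next
            case (Cons y r')
            have xy: "x \<in> set a" "y \<in> set a" "x \<noteq> y" using ab(2) \<open>a = x # r\<close> Cons by auto
            have lt: "x < z" "y < z" "z < n" using sep[OF xy(1) z] sep[OF xy(2) z] z ab(3) by auto
            have bb: "bef p x y" "bef p y n" "bef p n z" using ab(1) \<open>a = x # r\<close> Cons xy z by auto
            have "c1243 p \<or> c2143 p"
            proof (cases "x < y")
              case True
              then show ?thesis unfolding c1243_def using bb lt by blast
            next
              case False
              then have "y < x" using xy by simp
              then show ?thesis unfolding c2143_def using bb lt by blast
            qed
            then show ?thesis using tg unfolding good_def by auto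
          qed
        qed
        have x1: "x = 1"
        proof -
          have "1 \<in> set a \<union> set b" using ab(3) n2 by simp
          moreover have "1 \<notin> set b"
          proof
            assume "1 \<in> set b"
            moreover have "x \<in> set a" using a1 by simp
            ultimately have "x < 1" using sep by blast
            moreover have "x \<in> {1..<n}" using ab(3) a1 by auto
            ultimately show False by simp
          qed
          ultimately show ?thesis using a1 by simp
        qed
        have n1b: "1 \<notin> set b" using ab(2) a1 x1 by simp
        have setb: "set b = {1..<n} - {1}" using ab(3) a1 x1 n1b by auto
        have sb: "y \<in> set b \<longleftrightarrow> 2 \<le> y \<and> y < n" for y
          unfolding setb by auto
        define ys where "ys = map (\<lambda>x. x - 1) b"
        have "map Suc ys = b" unfolding ys_def map_map
        proof (rule map_idI)
          fix y assume "y \<in> set b"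
          then have "2 \<le> y" using sb by blast
          then show "(Suc \<circ> (\<lambda>x. x - 1)) y = y" by simp
        qed
        then have bys: "b = map Suc ys" by simp
        have dys: "distinct ys" using ab(2) bys by (simp add: distinct_map)
        have sys: "set ys = {1..n-2}"
        proof (rule set_eqI)
          fix y
          have "y \<in> set ys \<longleftrightarrow> Suc y \<in> set b" using bys by auto
          also have "\<dots> \<longleftrightarrow> y \<in> {1..n-2}" using sb[of "Suc y"] by auto
          finally show "y \<in> set ys \<longleftrightarrow> y \<in> {1..n-2}" .
        qed
        have nys: "ys \<noteq> []" using False2 bys by auto
        have gt1: "\<And>y. y \<in> set b \<Longrightarrow> 1 < y" using sb by simp
        have p1: "p = 1 # n # b" using ab(1) a1 x1 by simp
        have "\<not> c132 b"
        proof
          assume "c132 b"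
          then have "c132 (n # b)" using mono_pat(1)[of b "n # b"] by simp
          moreover have "\<And>x. x \<in> set (n # b) \<Longrightarrow> 1 < x" using gt1 n2 by auto
          ultimately have "c1243 (1 # n # b)" using c132_1243[of "n # b" 1] by blast
          then show False using tg p1 unfolding good_def by simp
        qed
        moreover have "\<not> c231 b"
        proof
          assume "c231 b"
          then have "c231 p" using mono_pat(2)[of b p] p1 by simp
          then show False using tg unfolding good_def by simp
        qed
        ultimately have "tgood ys" unfolding tgood_def using map_Suc_pat bys by simp
        then have "ys \<in> T (n-2) - {[]}" unfolding T_def perms_def using dys sys nys by simp
        then have "p \<in> (\<lambda>ys. 1 # n # map Suc ys) ` (T (n-2) - {[]})"
          using p1 bys by (intro image_eqI[where x=ys]) simp_all
        then show ?thesis by (rule UnI2)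
      qed
    qed
  qed
next
  show "((\<lambda>xs. xs @ [n]) ` S (n-1) \<union> (\<lambda>xs. n # xs) ` S (n-1))
               \<union> (\<lambda>ys. 1 # n # map Suc ys) ` (T (n-2) - {[]}) \<subseteq> S n"
  proof
    fix p assume "p \<in> ((\<lambda>xs. xs @ [n]) ` S (n-1) \<union> (\<lambda>xs. n # xs) ` S (n-1))
               \<union> (\<lambda>ys. 1 # n # map Suc ys) ` (T (n-2) - {[]})"
    then consider (A) xs where "xs \<in> S (n-1)" "p = xs @ [n] \<or> p = n # xs"
      | (C) ys where "ys \<in> T (n-2)" "ys \<noteq> []" "p = 1 # n # map Suc ys" by auto
    then show "p \<in> S n"
    proof cases
      case A
      have xp: "xs \<in> perms (n-1)" and tg: "good xs" using A unfolding S_def by auto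
      have lt: "\<And>x. x \<in> set xs \<Longrightarrow> x < n" using perms_bound[OF xp] n2 by fastforce
      have g1: "good (xs @ [n])" using tg snoc_max[OF lt] unfolding good_def by blast
      have g2: "good (n # xs)" using tg cons_max[OF lt] unfolding good_def by blast
      have "p \<in> perms n \<and> good p"
        using A(2) g1 g2 perms_snoc[OF xp] perms_cons[OF xp] n2 by auto
      then show ?thesis unfolding S_def by auto
    next
      case C
      have yp: "distinct ys" "set ys = {1..n-2}" and tg: "\<not> c132 ys" "\<not> c231 ys"
        using C unfolding T_def perms_def tgood_def by auto
      have "set ys \<noteq> {}" using C(2) by simp
      then have "{1..n-2} \<noteq> {}" using yp(2) by simp
      then have n3: "n \<ge> 3" by simp
      define q where "q = map Suc ys"
      have sq: "set q = Suc ` {1..n-2}" unfolding q_def using yp by simp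
      have q1: "\<And>x. x \<in> set q \<Longrightarrow> 1 < x \<and> x < n" unfolding sq using n3 by auto
      have tq: "\<not> c132 q" "\<not> c231 q" unfolding q_def map_Suc_pat using tg by auto
      have tq2: "\<not> c132 (n # q)" "\<not> c231 (n # q)" using tq cons_max[of q n] q1 by auto
      have gt: "\<And>x. x \<in> set (n # q) \<Longrightarrow> 1 < x" using q1 n3 by auto
      have "good p" unfolding good_def C(3) q_def[symmetric]
        using cons_min[OF gt] tq2 by blast
      moreover have "p \<in> perms n"
      proof -
        have "distinct q" unfolding q_def using yp by (simp add: distinct_map)
        moreover have "1 \<notin> set q" "n \<notin> set q" using q1 by auto
        ultimately have "distinct p" using C(3) n3 unfolding q_def[symmetric] by simp
        moreover have "set p = {1..n}" using C(3) sq setl[OF n3] unfolding q_def[symmetric] by simp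
        ultimately show ?thesis unfolding perms_def by simp
      qed
      ultimately show ?thesis unfolding S_def by simp
    qed
  qed
qed



lemma S1: "S 1 = {[1]}"
  unfolding S_def good_def c231_def c1243_def c2143_def perms1 by auto

lemma T0: "T 0 = {[]}"
  unfolding T_def tgood_def c231_def c132_def perms0 by auto

lemma card_S:
  assumes n2: "n \<ge> 2"
  shows "card (S n) = 2 * card (S (n-1)) + (if n \<ge> 3 then 2^(n-3) else 0)"
proof -
  let ?A = "(\<lambda>xs. xs @ [n]) ` S (n-1)"
  let ?B = "(\<lambda>xs. n # xs) ` S (n-1)"
  let ?C = "(\<lambda>ys. 1 # n # map Suc ys) ` (T (n-2) - {[]})"
  have finS: "finite (S (n-1))" unfolding S_def using finite_perms by simp
  have finT: "finite (T (n-2) - {[]})" unfolding T_def using finite_perms by simp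
  have ltS: "\<And>x. xs \<in> S (n-1) \<Longrightarrow> x \<in> set xs \<Longrightarrow> x < n" for xs
    using perms_bound n2 unfolding S_def by fastforce
  have neS: "xs \<in> S (n-1) \<Longrightarrow> xs \<noteq> []" for xs using n2 unfolding S_def perms_def by auto
  have ltT: "\<And>x. ys \<in> T (n-2) \<Longrightarrow> x \<in> set ys \<Longrightarrow> Suc x < n" for ys
    using perms_bound n2 unfolding T_def by fastforce
  have d1: "?A \<inter> ?B = {}"
  proof (rule ccontr)
    assume "?A \<inter> ?B \<noteq> {}"
    then obtain xs ys where h: "xs \<in> S (n-1)" "ys \<in> S (n-1)" "xs @ [n] = n # ys" by auto
    then obtain x xs' where "xs = x # xs'" using neS by (cases xs) auto
    then have "x = n" "x \<in> set xs" using h by auto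
    then show False using ltS[OF h(1)] by fastforce
  qed
  have d2: "(?A \<union> ?B) \<inter> ?C = {}"
  proof (rule ccontr)
    assume "(?A \<union> ?B) \<inter> ?C \<noteq> {}"
    then obtain p where p: "p \<in> ?A \<union> ?B" "p \<in> ?C" by blast
    from p(2) obtain ys where y: "ys \<in> T (n-2)" "ys \<noteq> []" "p = 1 # n # map Suc ys" by blast
    from p(1) obtain xs where x: "xs \<in> S (n-1)" "p = xs @ [n] \<or> p = n # xs" by blast
    have h: "xs \<in> S (n-1)" "ys \<in> T (n-2)" "ys \<noteq> []"
      "xs @ [n] = 1 # n # map Suc ys \<or> n # xs = 1 # n # map Suc ys" using x y by auto
    show False
    proof (cases "n # xs = 1 # n # map Suc ys")
      case True then show False using n2 by simp
    next
      case False
      then have e: "xs @ [n] = 1 # n # map Suc ys" using h n2 by auto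
      have "last (xs @ [n]) = last (1 # n # map Suc ys)" using e by simp
      then have "n = last (map Suc ys)" using h(3) by simp
      then have "n = Suc (last ys)" using h(3) by (simp add: last_map)
      moreover have "last ys \<in> set ys" using h(3) by simp
      then have "Suc (last ys) < n" using ltT[OF h(2)] by blast
      ultimately show False by simp
    qed
  qed
  have "card (S n) = card (?A \<union> ?B) + card ?C"
    using S_rec[OF n2] card_Un_disjoint[OF _ _ d2] finS finT by simp
  also have "card (?A \<union> ?B) = card ?A + card ?B"
    using card_Un_disjoint[OF _ _ d1] finS by simp
  also have "card ?A = card (S (n-1))" by (simp add: card_image inj_on_def)
  also have "card ?B = card (S (n-1))" by (simp add: card_image inj_on_def)
  also have "card ?C = card (T (n-2) - {[]})" by (simp add: card_image inj_on_def)
  also have "card (T (n-2) - {[]}) = (if n \<ge> 3 then 2^(n-3) else 0)"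
  proof (cases "n \<ge> 3")
    case True
    have "[] \<notin> T (n-2)" using True unfolding T_def perms_def by auto
    then have "T (n-2) - {[]} = T (n-2)" by simp
    then show ?thesis using card_T[of "n-2"] True by (simp add: numeral_3_eq_3)
  next
    case False
    then have "n = 2" using n2 by simp
    then show ?thesis using T0 by simp
  qed
  finally show ?thesis by simp
qed

lemma card_S_closed: "n \<ge> 2 \<Longrightarrow> 2 * card (S n) = (n + 2) * 2 ^ (n - 2)"
proof (induction n rule: dec_induct)
  case base
  show ?case using card_S[of 2] S1 by simp
next
  case (step n)
  have "card (S (Suc n)) = 2 * card (S n) + 2 ^ (n - 2)"
    using card_S[of "Suc n"] step(1) by simp
  moreover obtain m where "n = m + 2" using step(1) by (metis add.commute le_Suc_ex)
  ultimately show ?case using step(3) by (simp add: algebra_simps)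
qed

lemma S_eq:
  "{p \<in> perms n. avoids p [1,2,4,3] \<and> avoids p [2,1,4,3] \<and> avoids p [2,3,1]} = S n"
proof -
  have "p \<in> perms n \<Longrightarrow> (avoids p [1,2,4,3] \<and> avoids p [2,1,4,3] \<and> avoids p [2,3,1]) = good p" for p
    unfolding avoids_def good_def perms_def using c1243_iff c2143_iff c231_iff by simp
  then show ?thesis unfolding S_def by blast
qed

theorem corollary3p14:
  fixes n :: nat
  assumes "n \<ge> 2"
  shows "real (card {p \<in> perms n. avoids p [1,2,4,3] \<and> avoids p [2,1,4,3] \<and> avoids p [2,3,1]})
           = (real n + 2) * 2 powi (int n - 3)"
proof -
  have c: "2 * real (card (S n)) = (real n + 2) * 2 ^ (n - 2)"
  proof -
    have "real (2 * card (S n)) = real ((n + 2) * 2 ^ (n - 2))" using card_S_closed[OF assms] by simp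
    then show ?thesis by (simp add: algebra_simps)
  qed
  have e: "int n - 3 = int (n - 2) - 1" using assms by simp
  have "(2::real) powi (int (n - 2) - 1) = 2 powi (int (n - 2)) / 2 powi 1"
    by (rule power_int_diff) simp
  also have "\<dots> = 2 ^ (n - 2) / 2" by simp
  finally have "(2::real) powi (int n - 3) = 2 ^ (n - 2) / 2" unfolding e .
  then have p2: "(2::real) ^ (n - 2) = 2 * 2 powi (int n - 3)" by simp
  have "2 * real (card (S n)) = 2 * ((real n + 2) * 2 powi (int n - 3))"
    unfolding c p2 by (simp add: algebra_simps)
  then show ?thesis unfolding S_eq by simp
qed

end
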